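(* Let $R>0$ and let $E\subset\mathbb{R}^d$ be an $R$-supported body. Then $$co_R(E)=E_R\cap\Big(\bigcap_{a\in\partial E}C^a_{\mathcal{N}_R(E,a)}\Big).$$
   Context: A body is a nonempty closed subset of $\mathbb{R}^d$; $S^{d-1}$ is the unit sphere; $B(x)=\{y:|y-x|<R\}$. $E_R=\{x:\operatorname{dist}(x,E)<R\}$. The $R$-hulloid is $co_R(E)=\bigcap\{\mathbb{R}^d\setminus B : B \text{ an open ball of radius } R,\ B\cap E=\emptyset\}$ (equal to $\mathbb{R}^d$ if no such ball exists). For a body $A$ and $a\in\partial A$, $\mathcal{N}_R(A,a)=\{v\in S^{d-1}: A\cap B(a+Rv)=\emptyset\}$; $A$ is $R$-supported if $\mathcal{N}_R(A,a)\ne\emptyset$ for all $a\in\partial A$. For nonempty closed $\mathcal K\subset S^{d-1}$ and $x\in\mathbb{R}^d$, $C^x_{\mathcal K}=\bigcap_{v\in\mathcal K}(\mathbb{R}^d\setminus B(x+Rv))$. An intersection over an empty index set is $\mathbb{R}^d$. *)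

theory Defs
  imports "HOL-Analysis.Analysis"
begin

definition is_body :: "'a::euclidean_space set \<Rightarrow> bool" where
  "is_body A \<longleftrightarrow> A \<noteq> {} \<and> closed A"

definition nbhd :: "real \<Rightarrow> 'a::euclidean_space set \<Rightarrow> 'a set" where
  "nbhd R E = {x. infdist x E < R}"

text \<open>R-hulloid: intersection of complements of open R-balls disjoint from E
  (UNIV if there is no such ball, by the empty-intersection convention).\<close>
definition co_R :: "real \<Rightarrow> 'a::euclidean_space set \<Rightarrow> 'a set" where
  "co_R R E = \<Inter> {UNIV - ball c R | c. ball c R \<inter> E = {}}"

definition normals_R :: "real \<Rightarrow> 'a::euclidean_space set \<Rightarrow> 'a \<Rightarrow> 'a set" where
  "normals_R R A a = {v \<in> sphere 0 1. A \<inter> ball (a + R *\<^sub>R v) R = {}}"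

definition R_supported :: "real \<Rightarrow> 'a::euclidean_space set \<Rightarrow> bool" where
  "R_supported R A \<longleftrightarrow> is_body A \<and> (\<forall>a \<in> frontier A. normals_R R A a \<noteq> {})"

definition C_set :: "real \<Rightarrow> 'a::euclidean_space \<Rightarrow> 'a set \<Rightarrow> 'a set" where
  "C_set R x K = (\<Inter>v\<in>K. UNIV - ball (x + R *\<^sub>R v) R)"

end

theory Submission
  imports Defs
begin

theorem mainTheorem12:
  fixes E :: "'a::euclidean_space set" and R :: real
  assumes "R > 0" and "R_supported R E"
  shows "co_R R E = nbhd R E \<inter> (\<Inter>a\<in>frontier E. C_set R a (normals_R R E a))"
proof -
  have ne: "E \<noteq> {}" and cl: "closed E"
    using assms(2) by (auto simp: R_supported_def is_body_def)
  have idge: "infdist c E \<ge> R" if "ball c R \<inter> E = {}" for c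
  proof -
    obtain y where y: "y \<in> E" "infdist c E = dist c y"
      using infdist_attains_inf[OF cl ne] by blast
    have "y \<notin> ball c R" using that y(1) by blast
    then show ?thesis using y(2) by simp
  qed
  show ?thesis
  proof (intro equalityI subsetI)
    fix x assume x: "x \<in> co_R R E"
    have "infdist x E < R"
    proof (rule ccontr)
      assume "\<not> infdist x E < R"
      then have "\<And>y. y \<in> E \<Longrightarrow> \<not> dist x y < R"
        using infdist_le[of _ E x] by fastforce
      then have "ball x R \<inter> E = {}" by auto
      then have "UNIV - ball x R \<in> {UNIV - ball c R | c. ball c R \<inter> E = {}}" by blast
      moreover have "x \<notin> UNIV - ball x R" using assms(1) by simp
      ultimately have "x \<notin> co_R R E" unfolding co_R_def by (meson InterE)
      then show False using x by blast
    qed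
    moreover have "x \<in> C_set R a (normals_R R E a)" for a
      using x unfolding C_set_def co_R_def normals_R_def by blast
    ultimately show "x \<in> nbhd R E \<inter> (\<Inter>a\<in>frontier E. C_set R a (normals_R R E a))"
      by (auto simp: nbhd_def)
  next
    fix x assume x: "x \<in> nbhd R E \<inter> (\<Inter>a\<in>frontier E. C_set R a (normals_R R E a))"
    show "x \<in> co_R R E"
      unfolding co_R_def
    proof (rule InterI, clarify)
      fix c assume c: "ball c R \<inter> E = {}"
      show "x \<in> UNIV - ball c R"
      proof (rule ccontr)
        assume "x \<notin> UNIV - ball c R"
        then have xc: "dist c x < R" by auto
        define g where "g t = infdist ((1 - t) *\<^sub>R c + t *\<^sub>R x) E" for t
        have g0: "g 0 \<ge> R" using idge[OF c] by (simp add: g_def)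
        have g1: "g 1 \<le> R" using x by (simp add: g_def nbhd_def)
        have "continuous_on {0..1} g"
          unfolding g_def by (intro continuous_intros)
        then obtain t where t: "0 \<le> t" "t \<le> 1" "g t = R"
          using IVT2'[of g 1 R 0] g0 g1 by auto
        define m where "m = (1 - t) *\<^sub>R c + t *\<^sub>R x"
        have mx: "dist m x < R"
        proof -
          have "m - x = (1 - t) *\<^sub>R (c - x)" by (simp add: m_def algebra_simps)
          then have "dist m x = (1 - t) * dist c x"
            using t by (simp add: dist_norm)
          also have "\<dots> \<le> dist c x" using t by (simp add: mult_left_le_one_le)
          finally show ?thesis using xc by simp
        qed
        have im: "infdist m E = R" using t by (simp add: g_def m_def)
        have "\<And>y. y \<in> E \<Longrightarrow> \<not> dist m y < R"
          using infdist_le[of _ E m] im by fastforce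
        then have mE: "ball m R \<inter> E = {}" by auto
        obtain a where a: "a \<in> E" "infdist m E = dist m a"
          using infdist_attains_inf[OF cl ne] by blast
        have dma: "dist m a = R" using a im by simp
        have "a \<in> cball m R" using dma by simp
        then have "a \<in> closure (ball m R)" using assms(1) by simp
        moreover have "ball m R \<subseteq> - E" using mE by blast
        ultimately have "a \<in> closure (- E)" using closure_mono[OF \<open>ball m R \<subseteq> - E\<close>] by blast
        then have af: "a \<in> frontier E"
          using a(1) cl by (simp add: frontier_def interior_closure closure_closed)
        define v where "v = (1 / R) *\<^sub>R (m - a)"
        have av: "a + R *\<^sub>R v = m" using assms(1) by (simp add: v_def)
        have nv: "norm v = 1" using assms(1) dma by (simp add: v_def dist_norm norm_minus_commute)
        have "v \<in> normals_R R E a"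
          unfolding normals_R_def using av nv mE by auto
        then have "x \<notin> ball m R"
          using x af unfolding C_set_def av[symmetric] by blast
        then show False using mx by (simp add: dist_commute)
      qed
    qed
  qed
qed

end
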